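(* Assume $|\mathbb O|\ge2$. Let $\mathcal I\subseteq\mathcal V$ and consider the PID opinion dynamics with initial states satisfying $x_i(0)=\theta$ for all $i\in\mathcal I$. The following are equivalent: (1) the system almost surely converges to the consensus state $(\theta,\dots,\theta)$, regardless of the initial opinions $x_i(0)\in\mathbb O$ of the nodes $i\in\mathcal V\setminus\mathcal I$; (2) every non-empty strictly cohesive subset of $\mathcal V$ contains at least one node of $\mathcal I$.
   Context: Let $n\ge1$, $\mathcal V=\{1,\dots,n\}$, and let $W=(w_{ij})$ be an $n\times n$ row-stochastic matrix (nonnegative entries, each row summing to $1$). The opinion set is a finite set of consecutive integers $\mathbb O=\{k,\dots,k+s\}$, and $\theta\in\mathbb O$ is a fixed "truth". For $x\in\mathbb O^n$, $i\in\mathcal V$, $z\in\mathbb O$, define $C^i_{\mathrm{social}}(z;x)=\sum_{j=1}^n w_{ij}|z-x_j|$ and $C^i_{\mathrm{cog}}(z)=|z-\theta|$, and $P_i(x)=\{z\in\mathbb O: C^i_{\mathrm{social}}(z;x)\le C^i_{\mathrm{social}}(x_i;x),\ |z-\theta|\le |x_i-\theta|\}$. PID opinion dynamics: starting from $x(0)$, at each time $t+1$ a node $i$ is chosen uniformly at random from $\mathcal V$ and sets $x_i(t+1)$ to an element chosen at random from $P_i(x(t))$, each element having positive probability; all other nodes keep their opinions. A set $\mathcal M\subseteq\mathcal V$ is strictly cohesive if $\sum_{j\in\mathcal M}w_{ij}>\tfrac12$ for every $i\in\mathcal M$. *)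

theory Defs
  imports "HOL-Probability.Probability"
begin

text \<open>Nodes are 1..n; an opinion profile is a function nat => int (only the
values on 1..n matter). The opinion set is O = {k..k+s}.\<close>

type_synonym profile = "nat \<Rightarrow> int"

definition row_stochastic :: "nat \<Rightarrow> (nat \<Rightarrow> nat \<Rightarrow> real) \<Rightarrow> bool" where
  "row_stochastic n W \<longleftrightarrow>
     (\<forall>i\<in>{1..n}. \<forall>j\<in>{1..n}. W i j \<ge> 0) \<and>
     (\<forall>i\<in>{1..n}. (\<Sum>j=1..n. W i j) = 1)"

definition social_cost :: "nat \<Rightarrow> (nat \<Rightarrow> nat \<Rightarrow> real) \<Rightarrow> nat \<Rightarrow> int \<Rightarrow> profile \<Rightarrow> real" where
  "social_cost n W i z x = (\<Sum>j=1..n. W i j * real_of_int \<bar>z - x j\<bar>)"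

definition cog_cost :: "int \<Rightarrow> int \<Rightarrow> real" where
  "cog_cost \<theta> z = real_of_int \<bar>z - \<theta>\<bar>"

definition P_set :: "nat \<Rightarrow> (nat \<Rightarrow> nat \<Rightarrow> real) \<Rightarrow> int set \<Rightarrow> int \<Rightarrow> profile \<Rightarrow> nat \<Rightarrow> int set" where
  "P_set n W Opn \<theta> x i =
     {z \<in> Opn. social_cost n W i z x \<le> social_cost n W i (x i) x \<and> cog_cost \<theta> z \<le> cog_cost \<theta> (x i)}"

definition strictly_cohesive :: "nat \<Rightarrow> (nat \<Rightarrow> nat \<Rightarrow> real) \<Rightarrow> nat set \<Rightarrow> bool" where
  "strictly_cohesive n W M \<longleftrightarrow> M \<subseteq> {1..n} \<and> (\<forall>i\<in>M. (\<Sum>j\<in>M. W i j) > 1/2)"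

text \<open>A selection rule: for every profile with opinions in O and every node i,
a distribution on P_i(x) giving every element positive probability
(equivalently, with support exactly P_i(x), since P_i(x) is finite).\<close>
definition valid_selection ::
  "nat \<Rightarrow> (nat \<Rightarrow> nat \<Rightarrow> real) \<Rightarrow> int set \<Rightarrow> int \<Rightarrow> (profile \<Rightarrow> nat \<Rightarrow> int pmf) \<Rightarrow> bool" where
  "valid_selection n W Opn \<theta> q \<longleftrightarrow>
     (\<forall>x. (\<forall>j\<in>{1..n}. x j \<in> Opn) \<longrightarrow> (\<forall>i\<in>{1..n}. set_pmf (q x i) = P_set n W Opn \<theta> x i))"

definition pid_kernel :: "nat \<Rightarrow> (profile \<Rightarrow> nat \<Rightarrow> int pmf) \<Rightarrow> profile \<Rightarrow> profile pmf" where
  "pid_kernel n q x = bind_pmf (pmf_of_set {1..n}) (\<lambda>i. map_pmf (\<lambda>z. x(i := z)) (q x i))"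

definition markov_chain_process ::
  "'w measure \<Rightarrow> (nat \<Rightarrow> 'w \<Rightarrow> 's) \<Rightarrow> 's \<Rightarrow> ('s \<Rightarrow> 's pmf) \<Rightarrow> bool" where
  "markov_chain_process M X x0 K \<longleftrightarrow>
     prob_space M \<and>
     (\<forall>t. X t \<in> measurable M (count_space UNIV)) \<and>
     measure M {\<omega> \<in> space M. X 0 \<omega> = x0} = 1 \<and>
     (\<forall>t xs y. length xs = Suc t \<longrightarrow>
        measure M {\<omega> \<in> space M. \<forall>r\<le>Suc t. X r \<omega> = (xs @ [y]) ! r}
        = measure M {\<omega> \<in> space M. \<forall>r\<le>t. X r \<omega> = xs ! r} * pmf (K (last xs)) y)"

end

theory Submission imports Defs begin

lemma measure_bind_pmf_exp:
  "measure_pmf.prob (bind_pmf p F) A = measure_pmf.expectation p (\<lambda>x. measure_pmf.prob (F x) A)"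
  unfolding measure_pmf_bind
  apply (subst measure_pmf.measure_bind[where N="count_space UNIV"])
  apply (auto intro!: measurable_pmf_measure1 simp: space_subprob_algebra  measure_pmf.subprob_space_axioms)
  done

primrec pB :: "('s \<Rightarrow> 's pmf) \<Rightarrow> 's \<Rightarrow> nat \<Rightarrow> 's list pmf" where
  "pB K x 0 = return_pmf [x]"
| "pB K x (Suc t) = bind_pmf (pB K x t) (\<lambda>ys. map_pmf (\<lambda>y. ys @ [y]) (K (last ys)))"

lemma pB_supp:
  "ys \<in> set_pmf (pB K x t) \<Longrightarrow> length ys = Suc t \<and> hd ys = x \<and> (\<forall>r<t. ys!Suc r \<in> set_pmf (K (ys!r)))"
proof (induction t arbitrary: ys)
  case 0 then show ?case by simp
next
  case (Suc t)
  then obtain zs y where zs: "zs \<in> set_pmf (pB K x t)" "y \<in> set_pmf (K (last zs))" "ys = zs @ [y]" by auto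
  note IH = Suc.IH[OF zs(1)]
  have ne: "zs \<noteq> []" using IH by auto
  have "\<forall>r<Suc t. ys!Suc r \<in> set_pmf (K (ys!r))"
  proof (intro allI impI)
    fix r assume r: "r < Suc t"
    show "ys!Suc r \<in> set_pmf (K (ys!r))"
    proof (cases "r < t")
      case True then show ?thesis using IH zs(3) by (simp add: nth_append)
    next
      case False then have "r = t" using r by simp
      then show ?thesis using IH zs ne by (simp add: nth_append last_conv_nth)
    qed
  qed
  then show ?case using IH zs ne by simp
qed

lemma pB_ne: "ys \<in> set_pmf (pB K x t) \<Longrightarrow> ys \<noteq> [] \<and> hd ys = x"
  using pB_supp[of ys K x t] by auto

lemma pB_closed:
  assumes cl: "\<forall>x\<in>R. set_pmf (K x) \<subseteq> R" and x: "x \<in> R"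
  shows "ys \<in> set_pmf (pB K x t) \<Longrightarrow> set ys \<subseteq> R"
proof (induction t arbitrary: ys)
  case 0 then show ?case using x by simp
next
  case (Suc t)
  then obtain zs y where zs: "zs \<in> set_pmf (pB K x t)" "y \<in> set_pmf (K (last zs))" "ys = zs @ [y]" by auto
  have "zs \<noteq> []" using pB_ne[OF zs(1)] by simp
  then have "last zs \<in> R" using Suc.IH[OF zs(1)] by auto
  moreover have "set_pmf (K (last zs)) \<subseteq> R" using cl \<open>last zs \<in> R\<close> by blast
  ultimately show ?case using Suc.IH[OF zs(1)] zs by auto
qed

lemma pB_finite:
  assumes "finite R" "\<forall>x\<in>R. set_pmf (K x) \<subseteq> R" "x \<in> R"
  shows "finite (set_pmf (pB K x t))"
proof -
  have "set_pmf (pB K x t) \<subseteq> {xs. set xs \<subseteq> R \<and> length xs = Suc t}"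
  proof
    fix xs assume "xs \<in> set_pmf (pB K x t)"
    then show "xs \<in> {xs. set xs \<subseteq> R \<and> length xs = Suc t}"
      using pB_closed[OF assms(2,3)] pB_supp[of xs K x t] by simp
  qed
  then show ?thesis using finite_lists_length_eq[OF assms(1)] finite_subset by blast
qed

lemma pB_pmf_step:
  "pmf (pB K x (Suc t)) (ys @ [y]) = pmf (pB K x t) ys * pmf (K (last ys)) y"
proof -
  have "pmf (pB K x (Suc t)) (ys @ [y]) =
     measure_pmf.expectation (pB K x t) (\<lambda>zs. pmf (map_pmf (\<lambda>y. zs @ [y]) (K (last zs))) (ys @ [y]))"
    by (simp add: pmf_bind)
  also have "\<dots> = measure_pmf.expectation (pB K x t) (\<lambda>zs. if zs = ys then pmf (K (last ys)) y else 0)"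
  proof (rule Bochner_Integration.integral_cong[OF refl])
    fix zs
    have "(\<lambda>y. zs @ [y]) -` {ys @ [y]} = (if zs = ys then {y} else {})" by auto
    then show "pmf (map_pmf (\<lambda>y. zs @ [y]) (K (last zs))) (ys @ [y]) = (if zs = ys then pmf (K (last ys)) y else 0)"
      by (simp add: pmf_map measure_pmf_single)
  qed
  also have "\<dots> = pmf (pB K x t) ys * pmf (K (last ys)) y"
    by (subst integral_measure_pmf[where A="{ys}"]) (auto split: if_splits)
  finally show ?thesis .
qed

lemma pB_add:
  "pB K x (t + L) = bind_pmf (pB K x t) (\<lambda>xs. map_pmf (\<lambda>ys. xs @ tl ys) (pB K (last xs) L))"
proof (induction L)
  case 0 then show ?case by (simp add: bind_return_pmf')
next
  case (Suc L)
  have "pB K x (t + Suc L) = bind_pmf (pB K x (t + L)) (\<lambda>ys. map_pmf (\<lambda>y. ys @ [y]) (K (last ys)))" by simp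
  also have "\<dots> = bind_pmf (pB K x t) (\<lambda>xs. bind_pmf (map_pmf (\<lambda>ys. xs @ tl ys) (pB K (last xs) L))
        (\<lambda>ys. map_pmf (\<lambda>y. ys @ [y]) (K (last ys))))"
    by (simp add: Suc bind_assoc_pmf)
  also have "\<dots> = bind_pmf (pB K x t) (\<lambda>xs. map_pmf (\<lambda>ys. xs @ tl ys) (pB K (last xs) (Suc L)))"
  proof (rule bind_pmf_cong[OF refl])
    fix xs assume xs: "xs \<in> set_pmf (pB K x t)"
    have xne: "xs \<noteq> []" using pB_ne[OF xs] by simp
    show "bind_pmf (map_pmf (\<lambda>ys. xs @ tl ys) (pB K (last xs) L))
        (\<lambda>ys. map_pmf (\<lambda>y. ys @ [y]) (K (last ys))) = map_pmf (\<lambda>ys. xs @ tl ys) (pB K (last xs) (Suc L))"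
      unfolding bind_map_pmf pB.simps map_bind_pmf map_pmf_comp
    proof (rule bind_pmf_cong[OF refl])
      fix ys assume ys: "ys \<in> set_pmf (pB K (last xs) L)"
      have yne: "ys \<noteq> []" "hd ys = last xs" using pB_ne[OF ys] by auto
      have "last (xs @ tl ys) = last ys"
        using yne by (cases ys) auto
      moreover have "\<And>y. tl (ys @ [y]) = tl ys @ [y]" using yne by simp
      ultimately show "map_pmf (\<lambda>y. (xs @ tl ys) @ [y]) (K (last (xs @ tl ys))) =
         map_pmf (\<lambda>y. xs @ tl (ys @ [y])) (K (last ys))" by simp
    qed
  qed
  finally show ?case .
qed

lemma pB_cons:
  assumes "y \<in> set_pmf (K x)" "ys \<in> set_pmf (pB K y L)"
  shows "x # ys \<in> set_pmf (pB K x (Suc L))"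
proof -
  have e: "pB K x (Suc L) = bind_pmf (pB K x 1) (\<lambda>xs. map_pmf (\<lambda>ys. xs @ tl ys) (pB K (last xs) L))"
    using pB_add[of K x 1 L] by (simp only: One_nat_def plus_nat.simps)
  have "pB K x 1 = map_pmf (\<lambda>z. [x, z]) (K x)"
    by (simp only: One_nat_def pB.simps bind_return_pmf last.simps) simp
  then have "[x, y] \<in> set_pmf (pB K x 1)" using assms(1) by simp
  moreover have "ys = y # tl ys" using pB_ne[OF assms(2)] by (cases ys) auto
  moreover have "ys \<in> set_pmf (pB K (last [x,y]) L)" using assms(2) by simp
  then have "[x, y] @ tl ys \<in> (\<lambda>zs. [x,y] @ tl zs) ` set_pmf (pB K (last [x,y]) L)" by (rule imageI)
  ultimately have "[x, y] @ tl ys \<in> set_pmf (pB K x (Suc L))"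
    unfolding e by (simp only: set_bind_pmf set_map_pmf) blast
  then show ?thesis using \<open>ys = y # tl ys\<close> by simp
qed


lemma pB_hit:
  assumes prog: "\<forall>x\<in>R - C. \<exists>y\<in>set_pmf (K x). y \<in> R \<and> V y < (V x :: nat)"
  shows "x \<in> R \<Longrightarrow> V x \<le> L \<Longrightarrow> \<exists>ys\<in>set_pmf (pB K x L). \<exists>z\<in>set ys. z \<in> C"
proof (induction "V x" arbitrary: x L rule: less_induct)
  case (less x)
  show ?case
  proof (cases "x \<in> C")
    case True
    obtain ys where ys: "ys \<in> set_pmf (pB K x L)" using set_pmf_not_empty by fast
    then have "x \<in> set ys" using pB_ne[OF ys] by (cases ys) auto
    then show ?thesis using ys True by blast
  next
    case False
    then obtain y where y: "y \<in> set_pmf (K x)" "y \<in> R" "V y < V x" using prog less.prems by blast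
    then obtain L' where L: "L = Suc L'" "V y \<le> L'" using less.prems by (cases L) auto
    obtain ys z where ys: "ys \<in> set_pmf (pB K y L')" "z \<in> set ys" "z \<in> C"
      using less.hyps[OF y(3) y(2) L(2)] by blast
    have "x # ys \<in> set_pmf (pB K x L)" using pB_cons[OF y(1) ys(1)] L(1) by simp
    moreover have "z \<in> set (x # ys)" using ys(2) by simp
    ultimately show ?thesis using ys(3) by blast
  qed
qed

definition notC :: "'s set \<Rightarrow> 's list set" where
  "notC C = {xs. \<forall>z\<in>set xs. z \<notin> C}"

lemma decay_step:
  assumes fin: "finite R" and cl: "\<forall>x\<in>R. set_pmf (K x) \<subseteq> R" and x0: "x0 \<in> R"
    and del: "\<forall>x\<in>R. \<delta> \<le> measure_pmf.prob (pB K x L) (- notC C)"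
  shows "measure_pmf.prob (pB K x0 (t + L)) (notC C) \<le> (1 - \<delta>) * measure_pmf.prob (pB K x0 t) (notC C)"
proof -
  define S where "S = set_pmf (pB K x0 t)"
  have finS: "finite S" unfolding S_def using pB_finite[OF fin cl x0] .
  define f where "f xs = measure_pmf.prob (map_pmf (\<lambda>ys. xs @ tl ys) (pB K (last xs) L)) (notC C)" for xs
  have "measure_pmf.prob (pB K x0 (t + L)) (notC C) = measure_pmf.expectation (pB K x0 t) f"
    unfolding pB_add measure_bind_pmf_exp f_def ..
  also have "\<dots> = (\<Sum>xs\<in>S. pmf (pB K x0 t) xs * f xs)"
    using finS by (subst integral_measure_pmf[where A=S]) (auto simp: S_def)
  also have "\<dots> \<le> (\<Sum>xs\<in>S. pmf (pB K x0 t) xs * ((1 - \<delta>) * (if xs \<in> notC C then 1 else 0)))"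
  proof (rule sum_mono)
    fix xs assume xs: "xs \<in> S"
    have "f xs \<le> (1 - \<delta>) * (if xs \<in> notC C then 1 else 0)"
    proof (cases "xs \<in> notC C")
      case False
      then have "(\<lambda>ys. xs @ tl ys) -` notC C = {}" by (auto simp: notC_def)
      then show ?thesis using False by (simp add: f_def measure_map_pmf)
    next
      case True
      have xs': "xs \<in> set_pmf (pB K x0 t)" using xs unfolding S_def .
      have ne: "xs \<noteq> []" using pB_ne[OF xs'] by simp
      have lR: "last xs \<in> R" using pB_closed[OF cl x0 xs'] last_in_set[OF ne] by blast
      have lC: "last xs \<notin> C" using True ne unfolding notC_def by auto
      have "(\<lambda>ys. xs @ tl ys) -` notC C \<inter> set_pmf (pB K (last xs) L) = notC C \<inter> set_pmf (pB K (last xs) L)"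
      proof (intro set_eqI iffI)
        fix ys assume a: "ys \<in> (\<lambda>ys. xs @ tl ys) -` notC C \<inter> set_pmf (pB K (last xs) L)"
        then have h: "ys \<noteq> [] \<and> hd ys = last xs" using pB_ne[of ys K "last xs" L] by simp
        from a have t: "\<forall>z\<in>set (tl ys). z \<notin> C" unfolding notC_def by simp
        have "ys \<in> notC C" using h t lC unfolding notC_def by (cases ys) auto
        then show "ys \<in> notC C \<inter> set_pmf (pB K (last xs) L)" using a by blast
      next
        fix ys assume a: "ys \<in> notC C \<inter> set_pmf (pB K (last xs) L)"
        then have "ys \<noteq> []" using pB_ne[of ys K "last xs" L] by simp
        then have "set (tl ys) \<subseteq> set ys" by (cases ys) auto
        then have "xs @ tl ys \<in> notC C" using a True unfolding notC_def by simp blast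
        then show "ys \<in> (\<lambda>ys. xs @ tl ys) -` notC C \<inter> set_pmf (pB K (last xs) L)"
          using a by simp
      qed
      then have "f xs = measure_pmf.prob (pB K (last xs) L) (notC C)"
        unfolding f_def measure_map_pmf
        using measure_Int_set_pmf[of "pB K (last xs) L" "(\<lambda>ys. xs @ tl ys) -` notC C"]
          measure_Int_set_pmf[of "pB K (last xs) L" "notC C"] by simp
      also have "\<dots> = 1 - measure_pmf.prob (pB K (last xs) L) (- notC C)"
        using measure_pmf.prob_compl[of "- notC C" "pB K (last xs) L"] by (simp add: Compl_eq_Diff_UNIV Diff_Diff_Int)
      also have "\<dots> \<le> 1 - \<delta>" using del lR by auto
      finally show ?thesis using True by simp
    qed
    then show "pmf (pB K x0 t) xs * f xs \<le> pmf (pB K x0 t) xs * ((1 - \<delta>) * (if xs \<in> notC C then 1 else 0))"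
      by (rule mult_left_mono) simp
  qed
  also have "\<dots> = (1 - \<delta>) * (\<Sum>xs\<in>S. (if xs \<in> notC C then pmf (pB K x0 t) xs else 0))"
    unfolding sum_distrib_left by (rule sum.cong) auto
  also have "(\<Sum>xs\<in>S. (if xs \<in> notC C then pmf (pB K x0 t) xs else 0)) = (\<Sum>xs\<in>S \<inter> notC C. pmf (pB K x0 t) xs)"
    by (rule sum.inter_restrict[OF finS, symmetric])
  also have "(\<Sum>xs\<in>S \<inter> notC C. pmf (pB K x0 t) xs) = measure_pmf.prob (pB K x0 t) (notC C)"
    using measure_measure_pmf_finite[of "S \<inter> notC C" "pB K x0 t"] finS measure_Int_set_pmf[of "pB K x0 t" "notC C"]
    unfolding S_def by (simp add: Int_commute)
  finally show ?thesis .
qed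


definition hist :: "(nat \<Rightarrow> 'w \<Rightarrow> 's) \<Rightarrow> nat \<Rightarrow> 'w \<Rightarrow> 's list" where
  "hist X t \<omega> = map (\<lambda>r. X r \<omega>) [0..<Suc t]"

lemma hist_len: "length (hist X t \<omega>) = Suc t"
  by (simp add: hist_def)

lemma hist_nth: "r \<le> t \<Longrightarrow> hist X t \<omega> ! r = X r \<omega>"
  unfolding hist_def by (simp del: upt_Suc)

lemma hist_eq_iff: "length xs = Suc t \<Longrightarrow> (hist X t \<omega> = xs) = (\<forall>r\<le>t. X r \<omega> = xs!r)"
  by (auto simp: list_eq_iff_nth_eq hist_len hist_nth less_Suc_eq_le)

lemma set_hist: "set (hist X t \<omega>) = (\<lambda>r. X r \<omega>) ` {..t}"
  unfolding hist_def by (simp del: upt_Suc add: atLeast0LessThan lessThan_Suc_atMost)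

context
  fixes M :: "'w measure" and X :: "nat \<Rightarrow> 'w \<Rightarrow> 's" and x0 :: 's and K :: "'s \<Rightarrow> 's pmf"
  assumes mc: "markov_chain_process M X x0 K"
begin

lemma mc_prob: "prob_space M"
  using mc unfolding markov_chain_process_def by simp

lemma mc_meas: "{\<omega>\<in>space M. P (X r \<omega>)} \<in> sets M"
proof -
  have m: "X r \<in> measurable M (count_space UNIV)" using mc unfolding markov_chain_process_def by simp
  have "{\<omega>\<in>space M. P (X r \<omega>)} = X r -` {s. P s} \<inter> space M" by auto
  also have "\<dots> \<in> sets M" by (rule measurable_sets[OF m]) simp
  finally show ?thesis .
qed

lemma hist_meas: "{\<omega>\<in>space M. hist X t \<omega> = xs} \<in> sets M"
proof (cases "length xs = Suc t")
  case True
  then have "{\<omega>\<in>space M. hist X t \<omega> = xs} = {\<omega>\<in>space M. \<forall>r\<in>{..t}. X r \<omega> = xs!r}"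
    using hist_eq_iff[OF True, of X] by auto
  also have "\<dots> \<in> sets M" by (rule sets.sets_Collect_finite_All) (auto intro: mc_meas)
  finally show ?thesis .
next
  case False
  then have "{\<omega>\<in>space M. hist X t \<omega> = xs} = {}" using hist_len by (metis (mono_tags, lifting) Collect_empty_eq)
  then show ?thesis by (metis sets.empty_sets)
qed

lemma hist_meas_fin: "finite A \<Longrightarrow> {\<omega>\<in>space M. hist X t \<omega> \<in> A} \<in> sets M"
proof -
  assume fA: "finite A"
  have "{\<omega>\<in>space M. hist X t \<omega> \<in> A} = (\<Union>xs\<in>A. {\<omega>\<in>space M. hist X t \<omega> = xs})" by auto
  also have "\<dots> \<in> sets M" using fA by (intro sets.finite_UN hist_meas)
  finally show ?thesis .
qed

lemma hist_pmf: "measure M {\<omega>\<in>space M. hist X t \<omega> = xs} = pmf (pB K x0 t) xs"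
proof (induction t arbitrary: xs)
  case 0
  have P: "prob_space M" by (rule mc_prob)
  have m1: "measure M {\<omega>\<in>space M. X 0 \<omega> = x0} = 1" using mc unfolding markov_chain_process_def by simp
  show ?case
  proof (cases "xs = [x0]")
    case True
    then have "{\<omega>\<in>space M. hist X 0 \<omega> = xs} = {\<omega>\<in>space M. X 0 \<omega> = x0}" by (auto simp: hist_def)
    then show ?thesis using m1 True by simp
  next
    case False
    have "{\<omega>\<in>space M. hist X 0 \<omega> = xs} \<subseteq> space M - {\<omega>\<in>space M. X 0 \<omega> = x0}"
      using False by (auto simp: hist_def)
    then have "measure M {\<omega>\<in>space M. hist X 0 \<omega> = xs} \<le> measure M (space M - {\<omega>\<in>space M. X 0 \<omega> = x0})"
      by (rule finite_measure.finite_measure_mono[OF prob_space.finite_measure[OF P]])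
       (auto intro!: sets.Diff mc_meas)
    also have "\<dots> = 0" using prob_space.prob_compl[OF P mc_meas, of "\<lambda>s. s = x0" 0] m1 by simp
    finally have "measure M {\<omega>\<in>space M. hist X 0 \<omega> = xs} = 0" by (simp add: measure_le_0_iff)
    then show ?thesis using False by (simp add: pmf_return)
  qed
next
  case (Suc t)
  show ?case
  proof (cases "length xs = Suc (Suc t)")
    case True
    then obtain ys y where xs: "xs = ys @ [y]" and ly: "length ys = Suc t"
      by (metis append_butlast_last_id butlast_snoc length_butlast diff_Suc_1 list.size(3) nat.distinct(1))
    have step: "measure M {\<omega> \<in> space M. \<forall>r\<le>Suc t. X r \<omega> = (ys @ [y]) ! r}
        = measure M {\<omega> \<in> space M. \<forall>r\<le>t. X r \<omega> = ys ! r} * pmf (K (last ys)) y"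
      using mc ly unfolding markov_chain_process_def by blast
    have e1: "{\<omega> \<in> space M. \<forall>r\<le>Suc t. X r \<omega> = (ys @ [y]) ! r} = {\<omega>\<in>space M. hist X (Suc t) \<omega> = xs}"
      using hist_eq_iff[of xs "Suc t" X] True xs by auto
    have e2: "{\<omega> \<in> space M. \<forall>r\<le>t. X r \<omega> = ys ! r} = {\<omega>\<in>space M. hist X t \<omega> = ys}"
      using hist_eq_iff[OF ly, of X] by auto
    show ?thesis using step unfolding e1 e2 Suc.IH xs pB_pmf_step by simp
  next
    case False
    then have "{\<omega>\<in>space M. hist X (Suc t) \<omega> = xs} = {}" using hist_len by (metis (mono_tags, lifting) Collect_empty_eq)
    moreover have "pmf (pB K x0 (Suc t)) xs = 0"
      using False pB_supp[of xs K x0 "Suc t"] by (meson pmf_eq_0_set_pmf)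
    ultimately show ?thesis by (metis measure_empty)
  qed
qed

lemma hist_sum: "finite A \<Longrightarrow> measure M {\<omega>\<in>space M. hist X t \<omega> \<in> A} = (\<Sum>xs\<in>A. pmf (pB K x0 t) xs)"
proof -
  assume fA: "finite A"
  have P: "prob_space M" by (rule mc_prob)
  have "{\<omega>\<in>space M. hist X t \<omega> \<in> A} = (\<Union>xs\<in>A. {\<omega>\<in>space M. hist X t \<omega> = xs})" by auto
  then have "measure M {\<omega>\<in>space M. hist X t \<omega> \<in> A} = measure M (\<Union>xs\<in>A. {\<omega>\<in>space M. hist X t \<omega> = xs})"
    by simp
  also have "\<dots> = (\<Sum>xs\<in>A. measure M {\<omega>\<in>space M. hist X t \<omega> = xs})"
    by (rule finite_measure.finite_measure_finite_Union[OF prob_space.finite_measure[OF P] fA])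
      (auto intro: hist_meas simp: disjoint_family_on_def)
  also have "\<dots> = (\<Sum>xs\<in>A. pmf (pB K x0 t) xs)" by (simp add: hist_pmf)
  finally show ?thesis .
qed

lemma hist_measure:
  assumes fin: "finite R" and cl: "\<forall>x\<in>R. set_pmf (K x) \<subseteq> R" and x0: "x0 \<in> R"
    and E: "{\<omega>\<in>space M. hist X t \<omega> \<in> A} \<in> sets M"
  shows "measure M {\<omega>\<in>space M. hist X t \<omega> \<in> A} = measure_pmf.prob (pB K x0 t) A"
proof -
  have P: "prob_space M" by (rule mc_prob)
  define S where "S = set_pmf (pB K x0 t)"
  have finS: "finite S" unfolding S_def by (rule pB_finite[OF fin cl x0])
  have "measure M {\<omega>\<in>space M. hist X t \<omega> \<in> S} = 1"
    using hist_sum[OF finS] sum_pmf_eq_1[OF finS] unfolding S_def by simp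
  then have ae: "AE \<omega> in M. \<omega> \<in> {\<omega>\<in>space M. hist X t \<omega> \<in> S}" by (rule prob_space.AE_prob_1[OF P])
  have "measure M {\<omega>\<in>space M. hist X t \<omega> \<in> A} = measure M {\<omega>\<in>space M. hist X t \<omega> \<in> A \<inter> S}"
  proof (rule measure_eq_AE)
    show "AE \<omega> in M. (\<omega> \<in> {\<omega>\<in>space M. hist X t \<omega> \<in> A}) = (\<omega> \<in> {\<omega>\<in>space M. hist X t \<omega> \<in> A \<inter> S})"
      using ae by eventually_elim auto
    show "{\<omega>\<in>space M. hist X t \<omega> \<in> A} \<in> sets M" by (rule E)
    show "{\<omega>\<in>space M. hist X t \<omega> \<in> A \<inter> S} \<in> sets M" using finS by (intro hist_meas_fin) simp
  qed
  also have "\<dots> = (\<Sum>xs\<in>A \<inter> S. pmf (pB K x0 t) xs)" using finS by (intro hist_sum) simp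
  also have "\<dots> = measure_pmf.prob (pB K x0 t) (A \<inter> S)" using finS by (simp add: measure_measure_pmf_finite)
  also have "\<dots> = measure_pmf.prob (pB K x0 t) A" unfolding S_def by (rule measure_Int_set_pmf)
  finally show ?thesis .
qed

end


lemma absorb_chain:
  assumes mc: "markov_chain_process M X x0 K"
    and fin: "finite R" and cl: "\<forall>x\<in>R. set_pmf (K x) \<subseteq> R" and x0: "x0 \<in> R"
    and ab: "\<forall>x\<in>R \<inter> C. set_pmf (K x) \<subseteq> C"
    and prog: "\<forall>x\<in>R - C. \<exists>y\<in>set_pmf (K x). y \<in> R \<and> V y < (V x :: nat)"
  shows "AE \<omega> in M. \<exists>T. \<forall>t\<ge>T. X t \<omega> \<in> C"
proof -
  have P: "prob_space M" by (rule mc_prob[OF mc])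
  define L where "L = Max (V ` R)"
  have VL: "\<forall>x\<in>R. V x \<le> L" unfolding L_def using fin by auto
  define h where "h x = measure_pmf.prob (pB K x L) (- notC C)" for x
  have hpos: "\<forall>x\<in>R. h x > 0"
  proof
    fix x assume x: "x \<in> R"
    obtain ys z where ys: "ys \<in> set_pmf (pB K x L)" "z \<in> set ys" "z \<in> C"
      using pB_hit[OF prog x VL[rule_format, OF x]] by blast
    have "ys \<in> - notC C" using ys unfolding notC_def by auto
    then have "set_pmf (pB K x L) \<inter> (- notC C) \<noteq> {}" using ys(1) by blast
    then have "h x \<noteq> 0" unfolding h_def using measure_pmf_zero_iff[of "pB K x L" "- notC C"] by simp
    moreover have "h x \<ge> 0" unfolding h_def by simp
    ultimately show "h x > 0" by simp
  qed
  define \<delta> where "\<delta> = Min (h ` R)"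
  have Rne: "R \<noteq> {}" using x0 by auto
  have dpos: "\<delta> > 0" unfolding \<delta>_def using fin Rne hpos by simp
  have dle: "\<forall>x\<in>R. \<delta> \<le> h x" unfolding \<delta>_def using fin by simp
  have "\<delta> \<le> h x0" using dle x0 by blast
  moreover have "h x0 \<le> 1" unfolding h_def by simp
  ultimately have d1: "\<delta> \<le> 1" by linarith
  have decay: "measure_pmf.prob (pB K x0 (k * L)) (notC C) \<le> (1 - \<delta>) ^ k" for k
  proof (induction k)
    case 0 then show ?case by simp
  next
    case (Suc k)
    have "measure_pmf.prob (pB K x0 (Suc k * L)) (notC C) = measure_pmf.prob (pB K x0 (k * L + L)) (notC C)"
      by (simp add: add.commute)
    also have "\<dots> \<le> (1 - \<delta>) * measure_pmf.prob (pB K x0 (k * L)) (notC C)"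
      by (rule decay_step[OF fin cl x0]) (use dle in \<open>simp add: h_def\<close>)
    also have "\<dots> \<le> (1 - \<delta>) * (1 - \<delta>) ^ k" using Suc d1 by (intro mult_left_mono) auto
    finally show ?case by simp
  qed
  define Z where "Z = {\<omega>\<in>space M. \<forall>r. X r \<omega> \<notin> C}"
  have Zm: "Z \<in> sets M" unfolding Z_def by (intro sets.sets_Collect_countable_All mc_meas[OF mc])
  have NZ: "measure M Z \<le> (1 - \<delta>) ^ k" for k
  proof -
    define t where "t = k * L"
    have Neq: "{\<omega>\<in>space M. hist X t \<omega> \<in> notC C} = {\<omega>\<in>space M. \<forall>r\<in>{..t}. X r \<omega> \<notin> C}"
      by (auto simp: notC_def set_hist)
    have Nm: "{\<omega>\<in>space M. hist X t \<omega> \<in> notC C} \<in> sets M"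
      unfolding Neq by (intro sets.sets_Collect_finite_All mc_meas[OF mc]) auto
    have "Z \<subseteq> {\<omega>\<in>space M. hist X t \<omega> \<in> notC C}" unfolding Neq Z_def by auto
    then have "measure M Z \<le> measure M {\<omega>\<in>space M. hist X t \<omega> \<in> notC C}"
      by (intro finite_measure.finite_measure_mono[OF prob_space.finite_measure[OF P]] Nm)
    also have "\<dots> = measure_pmf.prob (pB K x0 t) (notC C)" by (rule hist_measure[OF mc fin cl x0 Nm])
    also have "\<dots> \<le> (1 - \<delta>) ^ k" using decay t_def by simp
    finally show ?thesis .
  qed
  have Z0: "measure M Z = 0"
  proof (rule ccontr)
    assume "measure M Z \<noteq> 0"
    moreover have "measure M Z \<ge> 0" by (rule measure_nonneg)
    ultimately have "measure M Z > 0" by linarith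
    moreover have "1 - \<delta> < 1" using dpos by simp
    ultimately obtain k where "(1 - \<delta>) ^ k < measure M Z" using real_arch_pow_inv by blast
    with NZ[of k] show False by simp
  qed
  have ae1: "AE \<omega> in M. \<exists>r. X r \<omega> \<in> C"
  proof -
    have "measure M (space M - Z) = 1" using prob_space.prob_compl[OF P Zm] Z0 by simp
    then have "AE \<omega> in M. \<omega> \<in> space M - Z" by (rule prob_space.AE_prob_1[OF P])
    then show ?thesis by eventually_elim (auto simp: Z_def)
  qed
  have ae2: "AE \<omega> in M. \<forall>t r r'. r \<le> r' \<longrightarrow> r' \<le> t \<longrightarrow> X r \<omega> \<in> C \<longrightarrow> X r' \<omega> \<in> C"
  proof (subst AE_all_countable, intro allI)
    fix t
    define A where "A = {xs. \<exists>r r'. r \<le> r' \<and> r' < length xs \<and> xs!r \<in> C \<and> xs!r' \<notin> C}"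
    define E where "E = {\<omega>\<in>space M. hist X t \<omega> \<in> A}"
    have Eeq: "E = {\<omega>\<in>space M. \<exists>r\<in>{..t}. \<exists>r'\<in>{..t}. r \<le> r' \<and> X r \<omega> \<in> C \<and> X r' \<omega> \<notin> C}"
    proof -
      have "hist X t \<omega> \<in> A \<longleftrightarrow> (\<exists>r\<in>{..t}. \<exists>r'\<in>{..t}. r \<le> r' \<and> X r \<omega> \<in> C \<and> X r' \<omega> \<notin> C)" for \<omega>
      proof
        assume "hist X t \<omega> \<in> A"
        then have "\<exists>r r'. r \<le> r' \<and> r' < Suc t \<and> hist X t \<omega> ! r \<in> C \<and> hist X t \<omega> ! r' \<notin> C"
          unfolding A_def by (simp add: hist_len)
        then obtain r r' where "r \<le> r'" "r' < Suc t" "hist X t \<omega> ! r \<in> C" "hist X t \<omega> ! r' \<notin> C"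
          by (elim exE conjE)
        then show "\<exists>r\<in>{..t}. \<exists>r'\<in>{..t}. r \<le> r' \<and> X r \<omega> \<in> C \<and> X r' \<omega> \<notin> C"
          by (intro bexI[of _ r] bexI[of _ r']) (auto simp: hist_nth)
      next
        assume "\<exists>r\<in>{..t}. \<exists>r'\<in>{..t}. r \<le> r' \<and> X r \<omega> \<in> C \<and> X r' \<omega> \<notin> C"
        then obtain r r' where "r \<le> r'" "r' \<le> t" "X r \<omega> \<in> C" "X r' \<omega> \<notin> C" by blast
        then show "hist X t \<omega> \<in> A" unfolding A_def
          by (intro CollectI exI[of _ r] exI[of _ r']) (auto simp: hist_nth hist_len)
      qed
      then show ?thesis unfolding E_def by auto
    qed
    have Em: "E \<in> sets M" unfolding Eeq
      by (intro sets.sets_Collect_finite_Ex sets.sets_Collect_conj sets.sets_Collect_const mc_meas[OF mc] finite_atMost)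
    have "measure M E = measure_pmf.prob (pB K x0 t) A"
      unfolding E_def by (rule hist_measure[OF mc fin cl x0 Em[unfolded E_def]])
    also have "\<dots> = 0"
    proof -
      have "set_pmf (pB K x0 t) \<inter> A = {}"
      proof (rule ccontr)
        assume "set_pmf (pB K x0 t) \<inter> A \<noteq> {}"
        then obtain xs where xs: "xs \<in> set_pmf (pB K x0 t)" and "xs \<in> A" by auto
        then have "\<exists>r r'. r \<le> r' \<and> r' < length xs \<and> xs!r \<in> C \<and> xs!r' \<notin> C" unfolding A_def by simp
        then obtain r r' where rr: "r \<le> r'" "r' < length xs"
          "xs!r \<in> C" "xs!r' \<notin> C" by (elim exE conjE)
        have sR: "set xs \<subseteq> R" using pB_closed[OF cl x0 xs] .
        have ch: "\<forall>i<t. xs!Suc i \<in> set_pmf (K (xs!i))" and len: "length xs = Suc t"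
          using pB_supp[OF xs] by auto
        have "r + d < length xs \<longrightarrow> xs!(r+d) \<in> C" for d
        proof (induction d)
          case 0 show ?case using rr(3) by simp
        next
          case (Suc d)
          show ?case
          proof
            assume a: "r + Suc d < length xs"
            then have "xs!(r+d) \<in> C" using Suc by simp
            moreover have "xs!(r+d) \<in> R" using sR a nth_mem[of "r+d" xs] by auto
            moreover have "xs!Suc (r+d) \<in> set_pmf (K (xs!(r+d)))" using ch a len by simp
            ultimately show "xs!(r + Suc d) \<in> C" using ab by auto
          qed
        qed
        then have "r + (r'-r) < length xs \<longrightarrow> xs!(r + (r'-r)) \<in> C" .
        moreover have "r + (r'-r) = r'" using rr by simp
        ultimately show False using rr by simp
      qed
      then show ?thesis by (simp add: measure_pmf_zero_iff)
    qed
    finally have E0: "measure M E = 0" .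
    have "measure M (space M - E) = 1" using prob_space.prob_compl[OF P Em] E0 by simp
    then have "AE \<omega> in M. \<omega> \<in> space M - E" by (rule prob_space.AE_prob_1[OF P])
    then show "AE \<omega> in M. \<forall>r r'. r \<le> r' \<longrightarrow> r' \<le> t \<longrightarrow> X r \<omega> \<in> C \<longrightarrow> X r' \<omega> \<in> C"
      by eventually_elim (auto simp: Eeq)
  qed
  from ae1 ae2 show ?thesis
  proof eventually_elim
    case (elim \<omega>)
    then obtain r where r: "X r \<omega> \<in> C" by blast
    have "\<forall>t\<ge>r. X t \<omega> \<in> C" using elim(2) r by blast
    then show ?case by blast
  qed
qed


lemma P_setD:
  assumes "z \<in> P_set n W Opn \<theta> x i"
  shows "z \<in> Opn" "\<bar>z - \<theta>\<bar> \<le> \<bar>x i - \<theta>\<bar>" "social_cost n W i z x \<le> social_cost n W i (x i) x"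
  using assms unfolding P_set_def cog_cost_def by auto

lemma P_setI:
  assumes "z \<in> Opn" "\<bar>z - \<theta>\<bar> \<le> \<bar>x i - \<theta>\<bar>" "social_cost n W i z x \<le> social_cost n W i (x i) x"
  shows "z \<in> P_set n W Opn \<theta> x i"
  using assms unfolding P_set_def cog_cost_def by auto

lemma set_pid_kernel:
  assumes "n \<ge> 1"
  shows "set_pmf (pid_kernel n q x) = (\<Union>i\<in>{1..n}. (\<lambda>z. x(i := z)) ` set_pmf (q x i))"
proof -
  have "{1..n} \<noteq> {}" using assms by auto
  then show ?thesis unfolding pid_kernel_def by (simp add: set_pmf_of_set)
qed

lemma social_move:
  assumes rs: "row_stochastic n W" and i: "i \<in> {1..n}" and Ms: "Ms \<subseteq> {1..n}"
    and half: "(\<Sum>j\<in>Ms. W i j) \<le> 1/2"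
    and d: "\<forall>j\<in>{1..n}. \<bar>z - x j\<bar> = \<bar>w - x j\<bar> + (if j \<in> Ms then 1 else -1)"
  shows "social_cost n W i z x \<le> social_cost n W i w x"
proof -
  have row: "(\<Sum>j=1..n. W i j) = 1" using rs i unfolding row_stochastic_def by auto
  have pt: "W i j * real_of_int \<bar>z - x j\<bar> = W i j * real_of_int \<bar>w - x j\<bar> + (2 * (if j \<in> Ms then W i j else 0) - W i j)"
    if "j \<in> {1..n}" for j
  proof -
    have e: "\<bar>z - x j\<bar> = \<bar>w - x j\<bar> + (if j \<in> Ms then 1 else -1)" using d that by blast
    have e': "real_of_int \<bar>z - x j\<bar> = real_of_int \<bar>w - x j\<bar> + (if j \<in> Ms then 1 else -1)"
      unfolding e by (cases "j \<in> Ms") simp_all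
    show ?thesis unfolding e' by (cases "j \<in> Ms") (simp_all add: algebra_simps)
  qed
  have "social_cost n W i z x = (\<Sum>j=1..n. W i j * real_of_int \<bar>w - x j\<bar> + (2 * (if j \<in> Ms then W i j else 0) - W i j))"
    unfolding social_cost_def by (rule sum.cong[OF refl]) (rule pt)
  also have "\<dots> = social_cost n W i w x + (2 * (\<Sum>j=1..n. (if j \<in> Ms then W i j else 0)) - (\<Sum>j=1..n. W i j))"
    unfolding social_cost_def by (simp add: sum.distrib sum_subtractf sum_distrib_left)
  also have "(\<Sum>j=1..n. (if j \<in> Ms then W i j else 0)) = (\<Sum>j\<in>Ms. W i j)"
  proof -
    have "(\<Sum>j=1..n. (if j \<in> Ms then W i j else 0)) = (\<Sum>j\<in>{1..n} \<inter> Ms. W i j)"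
      by (rule sum.inter_restrict[symmetric]) simp
    also have "{1..n} \<inter> Ms = Ms" using Ms by auto
    finally show ?thesis .
  qed
  finally show ?thesis using half row by simp
qed

lemma social_stuck:
  assumes rs: "row_stochastic n W" and i: "i \<in> {1..n}" and S: "S \<subseteq> {1..n}"
    and half: "(\<Sum>j\<in>S. W i j) > 1/2" and xa: "\<forall>j\<in>S. x j = a" and za: "z \<noteq> a"
  shows "social_cost n W i z x > social_cost n W i a x"
proof -
  have row: "(\<Sum>j=1..n. W i j) = 1" using rs i unfolding row_stochastic_def by auto
  have nn: "\<forall>j\<in>{1..n}. W i j \<ge> 0" using rs i unfolding row_stochastic_def by auto
  define d where "d = real_of_int \<bar>z - a\<bar>"
  have d1: "d \<ge> 1" unfolding d_def using za by linarith
  have pt: "W i j * real_of_int \<bar>z - x j\<bar> \<ge> W i j * real_of_int \<bar>a - x j\<bar> + d * (2 * (if j \<in> S then W i j else 0) - W i j)"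
    if j: "j \<in> {1..n}" for j
  proof (cases "j \<in> S")
    case True
    then show ?thesis using xa unfolding d_def by (simp add: algebra_simps)
  next
    case False
    have "real_of_int \<bar>z - x j\<bar> \<ge> real_of_int \<bar>a - x j\<bar> - d" unfolding d_def by linarith
    then have "W i j * real_of_int \<bar>z - x j\<bar> \<ge> W i j * (real_of_int \<bar>a - x j\<bar> - d)"
      using nn j by (intro mult_left_mono) auto
    then show ?thesis using False by (simp add: algebra_simps)
  qed
  have "social_cost n W i z x \<ge> (\<Sum>j=1..n. W i j * real_of_int \<bar>a - x j\<bar> + d * (2 * (if j \<in> S then W i j else 0) - W i j))"
    unfolding social_cost_def by (rule sum_mono) (rule pt)
  also have "(\<Sum>j=1..n. W i j * real_of_int \<bar>a - x j\<bar> + d * (2 * (if j \<in> S then W i j else 0) - W i j))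
      = social_cost n W i a x + d * (\<Sum>j=1..n. (2 * (if j \<in> S then W i j else 0) - W i j))"
    unfolding social_cost_def by (simp add: sum.distrib sum_distrib_left)
  also have "(\<Sum>j=1..n. (2 * (if j \<in> S then W i j else 0) - W i j))
      = 2 * (\<Sum>j=1..n. (if j \<in> S then W i j else 0)) - (\<Sum>j=1..n. W i j)"
    by (simp add: sum_subtractf sum_distrib_left)
  also have "(\<Sum>j=1..n. (if j \<in> S then W i j else 0)) = (\<Sum>j\<in>S. W i j)"
  proof -
    have "(\<Sum>j=1..n. (if j \<in> S then W i j else 0)) = (\<Sum>j\<in>{1..n} \<inter> S. W i j)"
      by (rule sum.inter_restrict[symmetric]) simp
    also have "{1..n} \<inter> S = S" using S by auto
    finally show ?thesis .
  qed
  finally have "social_cost n W i z x \<ge> social_cost n W i a x + d * (2 * (\<Sum>j\<in>S. W i j) - 1)"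
    using row by simp
  moreover have "d * (2 * (\<Sum>j\<in>S. W i j) - 1) > 0" using d1 half by simp
  ultimately show ?thesis by linarith
qed


lemma progress_comb:
  assumes rs: "row_stochastic n W"
    and coh: "\<forall>S. S \<noteq> {} \<longrightarrow> strictly_cohesive n W S \<longrightarrow> S \<inter> I \<noteq> {}"
    and xO: "\<forall>j\<in>{1..n}. x j \<in> {k..k + int s}" and xI: "\<forall>j\<in>I. x j = \<theta>"
    and th: "\<theta> \<in> {k..k + int s}" and j0: "j0 \<in> {1..n}" "x j0 \<noteq> \<theta>"
  shows "\<exists>i\<in>{1..n}. \<exists>z\<in>P_set n W {k..k + int s} \<theta> x i. \<bar>z - \<theta>\<bar> < \<bar>x i - \<theta>\<bar>"
proof -
  define J where "J = {1..n}"
  have finJ: "finite J" and neJ: "J \<noteq> {}" using j0 unfolding J_def by auto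
  show ?thesis
  proof (cases "\<exists>j\<in>J. x j > \<theta>")
    case True
    define m where "m = Max (x ` J)"
    have mge: "\<forall>j\<in>J. x j \<le> m" unfolding m_def using finJ by auto
    have mth: "m > \<theta>" using True mge by force
    define Ms where "Ms = {j\<in>J. x j = m}"
    have "m \<in> x ` J" unfolding m_def using finJ neJ by (intro Max_in) auto
    then obtain jm where "jm \<in> J" "x jm = m" by auto
    then have Msne: "Ms \<noteq> {}" unfolding Ms_def by auto
    have MsJ: "Ms \<subseteq> J" unfolding Ms_def by auto
    have MsI: "Ms \<inter> I = {}" using xI mth unfolding Ms_def by auto
    have "\<not> strictly_cohesive n W Ms" using coh Msne MsI by blast
    then obtain i where i: "i \<in> Ms" and half: "(\<Sum>j\<in>Ms. W i j) \<le> 1/2"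
      using MsJ unfolding strictly_cohesive_def J_def by force
    have iJ: "i \<in> J" and xi: "x i = m" using i unfolding Ms_def by auto
    have soc: "social_cost n W i (m - 1) x \<le> social_cost n W i m x"
    proof (rule social_move[OF rs _ _ half])
      show "i \<in> {1..n}" using iJ unfolding J_def .
      show "Ms \<subseteq> {1..n}" using MsJ unfolding J_def .
      show "\<forall>j\<in>{1..n}. \<bar>m - 1 - x j\<bar> = \<bar>m - x j\<bar> + (if j \<in> Ms then 1 else -1)"
      proof
        fix j assume j: "j \<in> {1..n}"
        then have "x j \<le> m" using mge unfolding J_def by auto
        then show "\<bar>m - 1 - x j\<bar> = \<bar>m - x j\<bar> + (if j \<in> Ms then 1 else -1)"
          using j unfolding Ms_def J_def by auto
      qed
    qed
    have xiO: "x i \<in> {k..k + int s}" using xO iJ unfolding J_def by auto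
    have "m - 1 \<in> P_set n W {k..k + int s} \<theta> x i"
      using soc xi xiO th mth by (intro P_setI) auto
    moreover have "\<bar>m - 1 - \<theta>\<bar> < \<bar>x i - \<theta>\<bar>" using xi mth by auto
    ultimately show ?thesis using iJ unfolding J_def by blast
  next
    case False
    then have le: "\<forall>j\<in>J. x j \<le> \<theta>" by auto
    define m where "m = Min (x ` J)"
    have mle: "\<forall>j\<in>J. m \<le> x j" unfolding m_def using finJ by auto
    have mth: "m < \<theta>" using j0 le mle unfolding J_def by force
    define Ms where "Ms = {j\<in>J. x j = m}"
    have "m \<in> x ` J" unfolding m_def using finJ neJ by (intro Min_in) auto
    then obtain jm where "jm \<in> J" "x jm = m" by auto
    then have Msne: "Ms \<noteq> {}" unfolding Ms_def by auto
    have MsJ: "Ms \<subseteq> J" unfolding Ms_def by auto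
    have MsI: "Ms \<inter> I = {}" using xI mth unfolding Ms_def by auto
    have "\<not> strictly_cohesive n W Ms" using coh Msne MsI by blast
    then obtain i where i: "i \<in> Ms" and half: "(\<Sum>j\<in>Ms. W i j) \<le> 1/2"
      using MsJ unfolding strictly_cohesive_def J_def by force
    have iJ: "i \<in> J" and xi: "x i = m" using i unfolding Ms_def by auto
    have soc: "social_cost n W i (m + 1) x \<le> social_cost n W i m x"
    proof (rule social_move[OF rs _ _ half])
      show "i \<in> {1..n}" using iJ unfolding J_def .
      show "Ms \<subseteq> {1..n}" using MsJ unfolding J_def .
      show "\<forall>j\<in>{1..n}. \<bar>m + 1 - x j\<bar> = \<bar>m - x j\<bar> + (if j \<in> Ms then 1 else -1)"
      proof
        fix j assume j: "j \<in> {1..n}"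
        then have "m \<le> x j" using mle unfolding J_def by auto
        then show "\<bar>m + 1 - x j\<bar> = \<bar>m - x j\<bar> + (if j \<in> Ms then 1 else -1)"
          using j unfolding Ms_def J_def by auto
      qed
    qed
    have xiO: "x i \<in> {k..k + int s}" using xO iJ unfolding J_def by auto
    have "m + 1 \<in> P_set n W {k..k + int s} \<theta> x i"
      using soc xi xiO th mth by (intro P_setI) auto
    moreover have "\<bar>m + 1 - \<theta>\<bar> < \<bar>x i - \<theta>\<bar>" using xi mth by auto
    ultimately show ?thesis using iJ unfolding J_def by blast
  qed
qed

theorem theorem6:
  fixes n :: nat and W :: "nat \<Rightarrow> nat \<Rightarrow> real" and k :: int and s :: nat
    and \<theta> :: int and I :: "nat set" and q :: "profile \<Rightarrow> nat \<Rightarrow> int pmf"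
  assumes "n \<ge> 1"
    and "row_stochastic n W"
    and "s \<ge> 1"
    and "\<theta> \<in> {k..k + int s}"
    and "I \<subseteq> {1..n}"
    and "valid_selection n W {k..k + int s} \<theta> q"
  shows "(\<forall>x0. (\<forall>j\<in>{1..n}. x0 j \<in> {k..k + int s}) \<longrightarrow> (\<forall>i\<in>I. x0 i = \<theta>) \<longrightarrow>
            (\<forall>(M :: (nat \<Rightarrow> profile) measure) X.
               markov_chain_process M X x0 (pid_kernel n q) \<longrightarrow>
               (AE \<omega> in M. \<exists>T. \<forall>t\<ge>T. \<forall>j\<in>{1..n}. X t \<omega> j = \<theta>)))
         \<longleftrightarrow> (\<forall>S. S \<noteq> {} \<longrightarrow> strictly_cohesive n W S \<longrightarrow> S \<inter> I \<noteq> {})"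
proof -
  let ?O = "{k..k + int s}"
  have J: "{1..n} \<noteq> {}" using assms(1) by auto
  show ?thesis
  proof
    assume H: "\<forall>x0. (\<forall>j\<in>{1..n}. x0 j \<in> {k..k + int s}) \<longrightarrow> (\<forall>i\<in>I. x0 i = \<theta>) \<longrightarrow>
            (\<forall>(M :: (nat \<Rightarrow> profile) measure) X.
               markov_chain_process M X x0 (pid_kernel n q) \<longrightarrow>
               (AE \<omega> in M. \<exists>T. \<forall>t\<ge>T. \<forall>j\<in>{1..n}. X t \<omega> j = \<theta>))"
    show "\<forall>S. S \<noteq> {} \<longrightarrow> strictly_cohesive n W S \<longrightarrow> S \<inter> I \<noteq> {}"
    proof (intro allI impI)
      fix S assume Sne: "S \<noteq> {}" and coh: "strictly_cohesive n W S"
      show "S \<inter> I \<noteq> {}"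
      proof
        assume SI: "S \<inter> I = {}"
        define a where "a = (if \<theta> = k then k + 1 else k)"
        have aO: "a \<in> ?O" and ath: "a \<noteq> \<theta>" using assms(3,4) unfolding a_def by auto
        define x0 :: profile where "x0 = (\<lambda>j. if j \<in> S then a else \<theta>)"
        have SJ: "S \<subseteq> {1..n}" and Shalf: "\<forall>i\<in>S. (\<Sum>j\<in>S. W i j) > 1/2"
          using coh unfolding strictly_cohesive_def by auto
        have x0O: "\<forall>j\<in>{1..n}. x0 j \<in> ?O" using aO assms(4) unfolding x0_def by auto
        have x0I: "\<forall>i\<in>I. x0 i = \<theta>" using SI unfolding x0_def by auto
        have x0S: "\<forall>j\<in>S. x0 j = a" unfolding x0_def by simp
        have Pq: "q x0 i = return_pmf (x0 i)" if i: "i \<in> {1..n}" for i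
        proof -
          have "set_pmf (q x0 i) = P_set n W ?O \<theta> x0 i"
            using assms(6) x0O i unfolding valid_selection_def by simp
          also have "\<dots> \<subseteq> {x0 i}"
          proof
            fix z assume z: "z \<in> P_set n W ?O \<theta> x0 i"
            note zD = P_setD[OF z]
            show "z \<in> {x0 i}"
            proof (cases "i \<in> S")
              case False
              then have "x0 i = \<theta>" unfolding x0_def by simp
              then show ?thesis using zD(2) by simp
            next
              case True
              then have xi: "x0 i = a" unfolding x0_def by simp
              show ?thesis
              proof (rule ccontr)
                assume "z \<notin> {x0 i}"
                then have "z \<noteq> a" using xi by simp
                then have "social_cost n W i z x0 > social_cost n W i a x0"
                  using social_stuck[OF assms(2) i SJ _ x0S] Shalf True by simp
                then show False using zD(3) xi by simp
              qed
            qed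
          qed
          finally show ?thesis by (simp add: set_pmf_subset_singleton)
        qed
        have K: "pid_kernel n q x0 = return_pmf x0"
        proof -
          have "pid_kernel n q x0 = bind_pmf (pmf_of_set {1..n}) (\<lambda>i. return_pmf x0)"
            unfolding pid_kernel_def
          proof (rule bind_pmf_cong[OF refl])
            fix i assume "i \<in> set_pmf (pmf_of_set {1..n})"
            moreover have SP: "set_pmf (pmf_of_set {1..n}) = {1..n}" by (rule set_pmf_of_set[OF J]) simp
            ultimately have i: "i \<in> {1..n}" by (simp only: SP)
            show "map_pmf (\<lambda>z. x0(i := z)) (q x0 i) = return_pmf x0" using Pq[OF i] by simp
          qed
          then show ?thesis by (simp add: bind_pmf_const)
        qed
        define M :: "(nat \<Rightarrow> profile) measure" where "M = measure_pmf (return_pmf (\<lambda>_. x0))"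
        define X :: "nat \<Rightarrow> (nat \<Rightarrow> profile) \<Rightarrow> profile" where "X = (\<lambda>t \<omega>. x0)"
        have mP: "measure M {\<omega>\<in>space M. P} = (if P then 1 else 0)" for P
          unfolding M_def by (cases P) auto
        have mc: "markov_chain_process M X x0 (pid_kernel n q)"
          unfolding markov_chain_process_def
        proof (intro conjI allI impI)
          show "prob_space M" unfolding M_def by (rule prob_space_measure_pmf)
          show "X t \<in> measurable M (count_space UNIV)" for t unfolding X_def by simp
          show "measure M {\<omega>\<in>space M. X 0 \<omega> = x0} = 1" unfolding X_def mP by simp
          fix t :: nat and xs :: "profile list" and y :: profile assume len: "length xs = Suc t"
          have eq1: "(\<forall>r\<le>Suc t. x0 = (xs @ [y]) ! r) \<longleftrightarrow> (\<forall>r\<le>t. x0 = xs ! r) \<and> y = x0"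
          proof
            assume a: "\<forall>r\<le>Suc t. x0 = (xs @ [y]) ! r"
            have "x0 = xs ! r" if "r \<le> t" for r using a[rule_format, of r] that len by (simp add: nth_append)
            moreover have "y = x0" using a[rule_format, of "Suc t"] len by (simp add: nth_append)
            ultimately show "(\<forall>r\<le>t. x0 = xs ! r) \<and> y = x0" by blast
          next
            assume a: "(\<forall>r\<le>t. x0 = xs ! r) \<and> y = x0"
            show "\<forall>r\<le>Suc t. x0 = (xs @ [y]) ! r"
            proof (intro allI impI)
              fix r assume "r \<le> Suc t"
              then consider "r \<le> t" | "r = Suc t" by linarith
              then show "x0 = (xs @ [y]) ! r" using a len by cases (simp_all add: nth_append)
            qed
          qed
          have lastx: "last xs = x0" if "\<forall>r\<le>t. x0 = xs ! r"
          proof -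
            have "xs \<noteq> []" using len by auto
            then have "last xs = xs ! (length xs - 1)" by (rule last_conv_nth)
            then have "last xs = xs ! t" using len by simp
            then show ?thesis using that[rule_format, of t] by simp
          qed
          show "measure M {\<omega>\<in>space M. \<forall>r\<le>Suc t. X r \<omega> = (xs @ [y]) ! r} =
            measure M {\<omega>\<in>space M. \<forall>r\<le>t. X r \<omega> = xs ! r} * pmf (pid_kernel n q (last xs)) y"
            unfolding X_def mP eq1 using lastx K by (auto simp: pmf_return)
        qed
        have AE: "AE \<omega> in M. \<exists>T. \<forall>t\<ge>T. \<forall>j\<in>{1..n}. X t \<omega> j = \<theta>"
          using H x0O x0I mc by blast
        obtain j where j: "j \<in> S" using Sne by auto
        have nc: "\<not> (\<exists>T. \<forall>t\<ge>T. \<forall>j\<in>{1..n}. X t \<omega> j = \<theta>)" for \<omega>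
        proof
          assume "\<exists>T. \<forall>t\<ge>T. \<forall>j\<in>{1..n}. X t \<omega> j = \<theta>"
          then obtain T where "\<forall>t\<ge>T. \<forall>j\<in>{1..n}. X t \<omega> j = \<theta>" by blast
          then have "X T \<omega> j = \<theta>" using j SJ by auto
          then show False using j ath unfolding X_def x0_def by simp
        qed
        from AE have "AE \<omega> in M. False" by eventually_elim (use nc in blast)
        then show False unfolding M_def by simp
      qed
    qed
  next
    assume coh: "\<forall>S. S \<noteq> {} \<longrightarrow> strictly_cohesive n W S \<longrightarrow> S \<inter> I \<noteq> {}"
    show "\<forall>x0. (\<forall>j\<in>{1..n}. x0 j \<in> {k..k + int s}) \<longrightarrow> (\<forall>i\<in>I. x0 i = \<theta>) \<longrightarrow>
            (\<forall>(M :: (nat \<Rightarrow> profile) measure) X.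
               markov_chain_process M X x0 (pid_kernel n q) \<longrightarrow>
               (AE \<omega> in M. \<exists>T. \<forall>t\<ge>T. \<forall>j\<in>{1..n}. X t \<omega> j = \<theta>))"
    proof (intro allI impI)
      fix x0 :: profile and M :: "(nat \<Rightarrow> profile) measure" and X :: "nat \<Rightarrow> (nat \<Rightarrow> profile) \<Rightarrow> profile"
      assume x0O: "\<forall>j\<in>{1..n}. x0 j \<in> ?O" and x0I: "\<forall>i\<in>I. x0 i = \<theta>"
        and mc: "markov_chain_process M X x0 (pid_kernel n q)"
      define R where "R = {x :: profile. (\<forall>j\<in>{1..n}. x j \<in> ?O) \<and> (\<forall>j. j \<notin> {1..n} \<longrightarrow> x j = x0 j) \<and> (\<forall>j\<in>I. x j = \<theta>)}"
      define C where "C = {x :: profile. \<forall>j\<in>{1..n}. x j = \<theta>}"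
      define V where "V x = (\<Sum>j=1..n. nat \<bar>x j - \<theta>\<bar>)" for x :: profile
      have x0R: "x0 \<in> R" unfolding R_def using x0O x0I by auto
      have finR: "finite R"
      proof -
        define g where "g f = (\<lambda>j. if j \<in> {1..n} then f j else x0 j)" for f :: "nat \<Rightarrow> int"
        have "R \<subseteq> g ` ({1..n} \<rightarrow>\<^sub>E ?O)"
        proof
          fix x assume x: "x \<in> R"
          have "x = g (restrict x {1..n})" using x unfolding R_def g_def by (auto simp: fun_eq_iff)
          moreover have "restrict x {1..n} \<in> {1..n} \<rightarrow>\<^sub>E ?O" using x unfolding R_def by auto
          ultimately show "x \<in> g ` ({1..n} \<rightarrow>\<^sub>E ?O)" by (rule image_eqI)
        qed
        moreover have "finite (g ` ({1..n} \<rightarrow>\<^sub>E ?O))" by (intro finite_imageI finite_PiE) auto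
        ultimately show ?thesis by (rule finite_subset)
      qed
      have qset: "set_pmf (q x i) = P_set n W ?O \<theta> x i" if "x \<in> R" "i \<in> {1..n}" for x i
        using assms(6) that unfolding valid_selection_def R_def by simp
      have kset: "\<exists>i z. i \<in> {1..n} \<and> z \<in> P_set n W ?O \<theta> x i \<and> y = x(i := z)"
        if y: "y \<in> set_pmf (pid_kernel n q x)" and x: "x \<in> R" for x y
      proof -
        from y obtain i z where i: "i \<in> {1..n}" and z: "z \<in> set_pmf (q x i)" and yq: "y = x(i:=z)"
          unfolding set_pid_kernel[OF assms(1)] by auto
        show ?thesis using i z yq qset[OF x i] by auto
      qed
      have cl: "\<forall>x\<in>R. set_pmf (pid_kernel n q x) \<subseteq> R"
      proof (intro ballI subsetI)
        fix x y assume x: "x \<in> R" and y: "y \<in> set_pmf (pid_kernel n q x)"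
        obtain i z where i: "i \<in> {1..n}" and z: "z \<in> P_set n W ?O \<theta> x i" and yq: "y = x(i:=z)"
          using kset[OF y x] by auto
        note zD = P_setD[OF z]
        have "x i = \<theta> \<Longrightarrow> z = \<theta>" using zD(2) by simp
        then show "y \<in> R" using x i zD(1) unfolding R_def yq by auto
      qed
      have ab: "\<forall>x\<in>R \<inter> C. set_pmf (pid_kernel n q x) \<subseteq> C"
      proof (intro ballI subsetI)
        fix x y assume x: "x \<in> R \<inter> C" and y: "y \<in> set_pmf (pid_kernel n q x)"
        obtain i z where i: "i \<in> {1..n}" and z: "z \<in> P_set n W ?O \<theta> x i" and yq: "y = x(i:=z)"
          using kset[OF y] x by auto
        note zD = P_setD[OF z]
        have "x i = \<theta>" using x i unfolding C_def by auto
        then have "z = \<theta>" using zD(2) by simp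
        then show "y \<in> C" using x unfolding C_def yq by auto
      qed
      have prog: "\<forall>x\<in>R - C. \<exists>y\<in>set_pmf (pid_kernel n q x). y \<in> R \<and> V y < V x"
      proof
        fix x assume x: "x \<in> R - C"
        then obtain j0 where j0: "j0 \<in> {1..n}" "x j0 \<noteq> \<theta>" unfolding C_def by auto
        have xO: "\<forall>j\<in>{1..n}. x j \<in> ?O" and xI: "\<forall>j\<in>I. x j = \<theta>" using x unfolding R_def by auto
        obtain i z where i: "i \<in> {1..n}" and z: "z \<in> P_set n W ?O \<theta> x i" and lt: "\<bar>z - \<theta>\<bar> < \<bar>x i - \<theta>\<bar>"
          using progress_comb[OF assms(2) coh xO xI assms(4) j0] by auto
        define y where "y = x(i:=z)"
        have yK: "y \<in> set_pmf (pid_kernel n q x)"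
        proof -
          have "z \<in> set_pmf (q x i)" using z qset[of x i] x i by simp
          then have "y \<in> (\<lambda>z. x(i := z)) ` set_pmf (q x i)" unfolding y_def by (rule imageI)
          then show ?thesis unfolding set_pid_kernel[OF assms(1)] using i by (rule UN_I[rotated])
        qed
        have "y \<in> R" using cl yK x by auto
        moreover have "V y < V x" unfolding V_def
        proof (rule sum_strict_mono_ex1)
          show "finite {1..n}" by simp
          show "\<forall>j\<in>{1..n}. nat \<bar>y j - \<theta>\<bar> \<le> nat \<bar>x j - \<theta>\<bar>" using lt unfolding y_def by auto
          show "\<exists>j\<in>{1..n}. nat \<bar>y j - \<theta>\<bar> < nat \<bar>x j - \<theta>\<bar>" using i lt unfolding y_def by (intro bexI[of _ i]) auto
        qed
        ultimately show "\<exists>y\<in>set_pmf (pid_kernel n q x). y \<in> R \<and> V y < V x" using yK by auto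
      qed
      have "AE \<omega> in M. \<exists>T. \<forall>t\<ge>T. X t \<omega> \<in> C" by (rule absorb_chain[OF mc finR cl x0R ab prog])
      then show "AE \<omega> in M. \<exists>T. \<forall>t\<ge>T. \<forall>j\<in>{1..n}. X t \<omega> j = \<theta>" unfolding C_def by simp
    qed
  qed
qed

end
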